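(* Let $a_1,\ldots,a_k$ be positive integers, $A=\sum_{j=1}^k a_j$, $n=k+3$, and $v=[4A+2;\,8a_1,\ldots,8a_k,\,1,\,1,\,1]$ (players $1,\ldots,n$). Let $v_{\&\{n-1,n\}}$ be the game in which players $n-1$ and $n$ merge into one player $\&\{n-1,n\}$ of weight $2$. Then $\beta_{\&\{n-1,n\}}(v_{\&\{n-1,n\}})>\beta_{n-1}(v)+\beta_n(v)$ if and only if there is a set $P\subseteq\{1,\ldots,k\}$ with $\sum_{j\in P}a_j=\sum_{j\notin P}a_j$.
   Context: A weighted voting game $[q;w_1,\ldots,w_n]$ has players $1,\ldots,n$ with nonnegative weights $w_j$ and quota $q$, $0<q\le\sum_jw_j$; a coalition $S$ is winning iff $\sum_{j\in S}w_j\ge q$. Player $j$ is critical in $S$ if $S$ is winning and $S\setminus\{j\}$ is losing; $\eta_j$ is the number of coalitions in which $j$ is critical, and the Banzhaf index is $\beta_j=\eta_j/\sum_k\eta_k$. Merging a set $T$ of players yields the WVG with the same quota in which the players of $T$ are replaced by a single player $\&T$ of weight $\sum_{j\in T}w_j$. *)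

theory Defs
  imports Main "HOL.Real"
begin

definition winning :: "('p \<Rightarrow> real) \<Rightarrow> real \<Rightarrow> 'p set \<Rightarrow> bool" where
  "winning w q S \<longleftrightarrow> q \<le> (\<Sum>j\<in>S. w j)"

definition critical :: "('p \<Rightarrow> real) \<Rightarrow> real \<Rightarrow> 'p \<Rightarrow> 'p set \<Rightarrow> bool" where
  "critical w q j S \<longleftrightarrow> j \<in> S \<and> winning w q S \<and> \<not> winning w q (S - {j})"

definition eta :: "'p set \<Rightarrow> ('p \<Rightarrow> real) \<Rightarrow> real \<Rightarrow> 'p \<Rightarrow> nat" where
  "eta N w q j = card {S. S \<subseteq> N \<and> critical w q j S}"

definition banzhaf :: "'p set \<Rightarrow> ('p \<Rightarrow> real) \<Rightarrow> real \<Rightarrow> 'p \<Rightarrow> real" where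
  "banzhaf N w q j = real (eta N w q j) / (\<Sum>k\<in>N. real (eta N w q k))"

text \<open>Merging the players of T into a single new player labelled t
  (t must not be a remaining player, i.e. t \<notin> N - T); the quota is unchanged.\<close>
definition merge_players :: "'p set \<Rightarrow> 'p set \<Rightarrow> 'p \<Rightarrow> 'p set" where
  "merge_players N T t = insert t (N - T)"

definition merge_weights :: "('p \<Rightarrow> real) \<Rightarrow> 'p set \<Rightarrow> 'p \<Rightarrow> ('p \<Rightarrow> real)" where
  "merge_weights w T t = (\<lambda>j. if j = t then (\<Sum>i\<in>T. w i) else w j)"

end

theory Submission
  imports Defs
begin


lemma crit_alt: "finite S \<Longrightarrow> critical w q j S \<longleftrightarrow> j \<in> S \<and> q \<le> sum w S \<and> sum w S < q + w j"
  unfolding critical_def winning_def by (auto simp: sum_diff1)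

definition hc :: "(nat \<Rightarrow> real) \<Rightarrow> real \<Rightarrow> nat \<Rightarrow> nat set \<Rightarrow> nat set \<Rightarrow> nat" where
  "hc ww q j K M = card {S. S \<subseteq> K \<and> critical ww q j (M \<union> S)}"

lemma card_split_Pow:
  assumes fK: "finite K" and fZ: "finite Z" and dis: "K \<inter> Z = {}"
  shows "card {S. S \<subseteq> K \<union> Z \<and> P S} = (\<Sum>M\<in>Pow Z. card {S. S \<subseteq> K \<and> P (M \<union> S)})"
proof -
  have eq: "{S. S \<subseteq> K \<union> Z \<and> P S} = (\<Union>M\<in>Pow Z. (\<lambda>S. M \<union> S) ` {S. S \<subseteq> K \<and> P (M \<union> S)})"
  proof (intro equalityI subsetI)
    fix S assume S: "S \<in> {S. S \<subseteq> K \<union> Z \<and> P S}"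
    have e: "S = (S \<inter> Z) \<union> (S \<inter> K)" using S by auto
    have "S \<inter> K \<in> {S'. S' \<subseteq> K \<and> P ((S \<inter> Z) \<union> S')}" using S e by auto
    then have "S \<in> (\<lambda>S'. (S \<inter> Z) \<union> S') ` {S'. S' \<subseteq> K \<and> P ((S \<inter> Z) \<union> S')}"
      using e by blast
    then show "S \<in> (\<Union>M\<in>Pow Z. (\<lambda>S. M \<union> S) ` {S. S \<subseteq> K \<and> P (M \<union> S)})" by blast
  qed auto
  have inj: "inj_on (\<lambda>S. M \<union> S) {S. S \<subseteq> K \<and> P (M \<union> S)}" if "M \<in> Pow Z" for M
  proof (rule inj_onI)
    fix S1 S2 assume "S1 \<in> {S. S \<subseteq> K \<and> P (M \<union> S)}" "S2 \<in> {S. S \<subseteq> K \<and> P (M \<union> S)}" "M \<union> S1 = M \<union> S2"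
    then have "(M \<union> S1) \<inter> K = (M \<union> S2) \<inter> K" by simp
    moreover have "(M \<union> S1) \<inter> K = S1" "(M \<union> S2) \<inter> K = S2" using that dis \<open>S1 \<in> _\<close> \<open>S2 \<in> _\<close> by auto
    ultimately show "S1 = S2" by simp
  qed
  have "card (\<Union>M\<in>Pow Z. (\<lambda>S. M \<union> S) ` {S. S \<subseteq> K \<and> P (M \<union> S)})
      = (\<Sum>M\<in>Pow Z. card ((\<lambda>S. M \<union> S) ` {S. S \<subseteq> K \<and> P (M \<union> S)}))"
  proof (rule card_UN_disjoint)
    show "finite (Pow Z)" using fZ by simp
    show "\<forall>i\<in>Pow Z. finite ((\<lambda>S. i \<union> S) ` {S. S \<subseteq> K \<and> P (i \<union> S)})"
      using fK by auto
    show "\<forall>i\<in>Pow Z. \<forall>j\<in>Pow Z. i \<noteq> j \<longrightarrow> ((\<lambda>S. i \<union> S) ` {S. S \<subseteq> K \<and> P (i \<union> S)}) \<inter> ((\<lambda>S. j \<union> S) ` {S. S \<subseteq> K \<and> P (j \<union> S)}) = {}"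
    proof (intro ballI impI)
      fix i j assume ij: "i \<in> Pow Z" "j \<in> Pow Z" "i \<noteq> j"
      show "((\<lambda>S. i \<union> S) ` {S. S \<subseteq> K \<and> P (i \<union> S)}) \<inter> ((\<lambda>S. j \<union> S) ` {S. S \<subseteq> K \<and> P (j \<union> S)}) = {}"
      proof (rule ccontr)
        assume "\<not> ?thesis"
        then obtain S1 S2 where "S1 \<subseteq> K" "S2 \<subseteq> K" "i \<union> S1 = j \<union> S2" by auto
        then have "(i \<union> S1) \<inter> Z = (j \<union> S2) \<inter> Z" by simp
        moreover have "(i \<union> S1) \<inter> Z = i" "(j \<union> S2) \<inter> Z = j" using ij dis \<open>S1 \<subseteq> K\<close> \<open>S2 \<subseteq> K\<close> by auto
        ultimately show False using ij by simp
      qed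
    qed
  qed
  also have "\<dots> = (\<Sum>M\<in>Pow Z. card {S. S \<subseteq> K \<and> P (M \<union> S)})"
    by (rule sum.cong) (auto simp: card_image inj)
  finally show ?thesis using eq by simp
qed

lemma sum_Pow_insert:
  assumes "finite Z" "x \<notin> Z"
  shows "(\<Sum>M\<in>Pow (insert x Z). f M) = (\<Sum>M\<in>Pow Z. f M) + (\<Sum>M\<in>Pow Z. f (insert x M))"
proof -
  have "(\<Sum>M\<in>Pow (insert x Z). f M) = (\<Sum>M\<in>Pow Z. f M) + (\<Sum>M\<in>insert x ` Pow Z. f M)"
    unfolding Pow_insert by (rule sum.union_disjoint) (use assms in auto)
  also have "(\<Sum>M\<in>insert x ` Pow Z. f M) = (\<Sum>M\<in>Pow Z. f (insert x M))"
    by (rule sum.reindex_cong[where l="insert x"]) (use assms in \<open>auto simp: inj_on_def\<close>)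
  finally show ?thesis .
qed

definition GB :: "real \<Rightarrow> (nat \<Rightarrow> nat) \<Rightarrow> nat \<Rightarrow> nat set \<Rightarrow> real \<Rightarrow> nat" where
  "GB Q a j K c = card {S. S \<subseteq> K \<and> j \<in> S \<and> Q \<le> c + 8 * real (sum a S) \<and> c + 8 * real (sum a S) < Q + 8 * real (a j)}"

definition GS :: "real \<Rightarrow> (nat \<Rightarrow> nat) \<Rightarrow> nat set \<Rightarrow> real \<Rightarrow> real \<Rightarrow> nat" where
  "GS Q a K c d = card {S. S \<subseteq> K \<and> Q \<le> c + 8 * real (sum a S) \<and> c + 8 * real (sum a S) < Q + d}"

lemma sumw_K:
  assumes "S \<subseteq> K" "\<forall>i\<in>K. ww i = 8 * real (a i)"
  shows "sum ww S = 8 * real (sum a S)"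
proof -
  have "sum ww S = (\<Sum>i\<in>S. 8 * real (a i))" using assms by (intro sum.cong) auto
  then show ?thesis by (simp add: sum_distrib_left)
qed

lemma sum_MS:
  assumes "finite K" "finite M" "M \<inter> K = {}" "S \<subseteq> K" "\<forall>i\<in>K. ww i = 8 * real (a i)"
  shows "sum ww (M \<union> S) = sum ww M + 8 * real (sum a S)"
proof -
  have "finite S" using assms finite_subset by blast
  then have "sum ww (M \<union> S) = sum ww M + sum ww S"
    using assms by (intro sum.union_disjoint) auto
  then show ?thesis using sumw_K[OF assms(4,5)] by simp
qed

lemma hc_big:
  assumes "finite K" "finite M" "M \<inter> K = {}" "j \<in> K" "\<forall>i\<in>K. ww i = 8 * real (a i)"
  shows "hc ww Q j K M = GB Q a j K (sum ww M)"
  unfolding hc_def GB_def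
proof (rule arg_cong[where f=card], rule Collect_cong)
  fix S
  show "(S \<subseteq> K \<and> critical ww Q j (M \<union> S)) =
        (S \<subseteq> K \<and> j \<in> S \<and> Q \<le> sum ww M + 8 * real (sum a S) \<and> sum ww M + 8 * real (sum a S) < Q + 8 * real (a j))"
  proof (cases "S \<subseteq> K")
    case True
    have f: "finite (M \<union> S)" using assms True finite_subset by blast
    have jm: "j \<notin> M" using assms by auto
    show ?thesis using True crit_alt[OF f] sum_MS[OF assms(1-3) True assms(5)] assms(4,5) jm by auto
  qed simp
qed

lemma hc_small:
  assumes "finite K" "finite M" "M \<inter> K = {}" "j \<in> M" "\<forall>i\<in>K. ww i = 8 * real (a i)"
  shows "hc ww Q j K M = GS Q a K (sum ww M) (ww j)"
  unfolding hc_def GS_def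
proof (rule arg_cong[where f=card], rule Collect_cong)
  fix S
  show "(S \<subseteq> K \<and> critical ww Q j (M \<union> S)) =
        (S \<subseteq> K \<and> Q \<le> sum ww M + 8 * real (sum a S) \<and> sum ww M + 8 * real (sum a S) < Q + ww j)"
  proof (cases "S \<subseteq> K")
    case True
    have f: "finite (M \<union> S)" using assms True finite_subset by blast
    show ?thesis using True crit_alt[OF f] sum_MS[OF assms(1-3) True assms(5)] assms(4) by auto
  qed simp
qed

lemma hc_out:
  assumes "j \<notin> M" "j \<notin> K"
  shows "hc ww Q j K M = 0"
proof -
  have "{S. S \<subseteq> K \<and> critical ww Q j (M \<union> S)} = {}"
    using assms by (auto simp: critical_def)
  then show ?thesis unfolding hc_def by (metis card.empty)
qed

lemma GB01: "GB (4 * real A + 2) a j K 0 = GB (4 * real A + 2) a j K 1"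
  unfolding GB_def
proof (rule arg_cong[where f=card], rule Collect_cong)
  fix S
  define X where "X = sum a S"
  have "(4*A+2 \<le> 8*X) \<longleftrightarrow> (4*A+2 \<le> 1+8*X)" by presburger
  then have 1: "(4 * real A + 2 \<le> 0 + 8 * real X) \<longleftrightarrow> (4 * real A + 2 \<le> 1 + 8 * real X)"
    by (metis (mono_tags) of_nat_le_iff of_nat_add of_nat_mult of_nat_numeral of_nat_1 add_0)
  have "(8*X < 4*A+2+8*a j) \<longleftrightarrow> (1+8*X < 4*A+2+8*a j)" by presburger
  then have 2: "(0 + 8 * real X < 4 * real A + 2 + 8 * real (a j)) \<longleftrightarrow> (1 + 8 * real X < 4 * real A + 2 + 8 * real (a j))"
    by (metis (mono_tags) of_nat_less_iff of_nat_add of_nat_mult of_nat_numeral of_nat_1 add_0)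
  show "(S \<subseteq> K \<and> j \<in> S \<and> 4 * real A + 2 \<le> 0 + 8 * real (sum a S) \<and> 0 + 8 * real (sum a S) < 4 * real A + 2 + 8 * real (a j)) =
        (S \<subseteq> K \<and> j \<in> S \<and> 4 * real A + 2 \<le> 1 + 8 * real (sum a S) \<and> 1 + 8 * real (sum a S) < 4 * real A + 2 + 8 * real (a j))"
    using 1 2 unfolding X_def by blast
qed

lemma GB23: "GB (4 * real A + 2) a j K 2 = GB (4 * real A + 2) a j K 3"
  unfolding GB_def
proof (rule arg_cong[where f=card], rule Collect_cong)
  fix S
  define X where "X = sum a S"
  have "(4*A+2 \<le> 2+8*X) \<longleftrightarrow> (4*A+2 \<le> 3+8*X)" by presburger
  then have 1: "(4 * real A + 2 \<le> 2 + 8 * real X) \<longleftrightarrow> (4 * real A + 2 \<le> 3 + 8 * real X)"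
    by (metis (mono_tags) of_nat_le_iff of_nat_add of_nat_mult of_nat_numeral of_nat_1 add_0)
  have "(2+8*X < 4*A+2+8*a j) \<longleftrightarrow> (3+8*X < 4*A+2+8*a j)" by presburger
  then have 2: "(2 + 8 * real X < 4 * real A + 2 + 8 * real (a j)) \<longleftrightarrow> (3 + 8 * real X < 4 * real A + 2 + 8 * real (a j))"
    by (metis (mono_tags) of_nat_less_iff of_nat_add of_nat_mult of_nat_numeral of_nat_1 add_0)
  show "(S \<subseteq> K \<and> j \<in> S \<and> 4 * real A + 2 \<le> 2 + 8 * real (sum a S) \<and> 2 + 8 * real (sum a S) < 4 * real A + 2 + 8 * real (a j)) =
        (S \<subseteq> K \<and> j \<in> S \<and> 4 * real A + 2 \<le> 3 + 8 * real (sum a S) \<and> 3 + 8 * real (sum a S) < 4 * real A + 2 + 8 * real (a j))"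
    using 1 2 unfolding X_def by blast
qed

lemma GS_zero:
  assumes "c = 1 \<or> c = 3"
  shows "GS (4 * real A + 2) a K (real c) 1 = 0"
proof -
  have "{S. S \<subseteq> K \<and> 4 * real A + 2 \<le> real c + 8 * real (sum a S) \<and> real c + 8 * real (sum a S) < 4 * real A + 2 + 1} = {}"
  proof (safe)
    fix S assume "4 * real A + 2 \<le> real c + 8 * real (sum a S)" "real c + 8 * real (sum a S) < 4 * real A + 2 + 1"
    then have "4*A+2 \<le> c + 8 * sum a S" "c + 8 * sum a S < 4*A+2+1"
      by (metis (mono_tags) of_nat_less_iff of_nat_le_iff of_nat_add of_nat_mult of_nat_numeral of_nat_1)+
    then have False using assms by presburger
    then show "S \<in> {}" by simp
  qed
  then show ?thesis unfolding GS_def by (metis card.empty)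
qed

lemma GS_p:
  assumes "(c = 2 \<and> d = 1) \<or> (c = 2 \<and> d = 2) \<or> (c = 3 \<and> d = 2)"
  shows "GS (4 * real A + 2) a K (real c) (real d) = card {S. S \<subseteq> K \<and> 2 * sum a S = A}"
  unfolding GS_def
proof (rule arg_cong[where f=card], rule Collect_cong)
  fix S
  define X where "X = sum a S"
  have "(4*A+2 \<le> c + 8*X \<and> c + 8*X < 4*A+2+d) \<longleftrightarrow> 2*X = A" using assms by presburger
  then have "(4 * real A + 2 \<le> real c + 8 * real X \<and> real c + 8 * real X < 4 * real A + 2 + real d) \<longleftrightarrow> 2*X = A"
    by (metis (mono_tags) of_nat_less_iff of_nat_le_iff of_nat_add of_nat_mult of_nat_numeral of_nat_1)
  then show "(S \<subseteq> K \<and> 4 * real A + 2 \<le> real c + 8 * real (sum a S) \<and> real c + 8 * real (sum a S) < 4 * real A + 2 + real d) =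
        (S \<subseteq> K \<and> 2 * sum a S = A)" unfolding X_def by blast
qed

lemma hc_eval:
  assumes "finite K" "finite M" "M \<inter> K = {}" "\<forall>i\<in>K. ww i = 8 * real (a i)"
  shows "hc ww Q j K M = (if j \<in> K then GB Q a j K (sum ww M) else if j \<in> M then GS Q a K (sum ww M) (ww j) else 0)"
  using hc_big[OF assms(1-3) _ assms(4)] hc_small[OF assms(1-3) _ assms(4)] hc_out by auto

lemma expand3:
  fixes x y z :: nat
  assumes "x \<noteq> y" "x \<noteq> z" "y \<noteq> z"
  shows "(\<Sum>M\<in>Pow {x,y,z}. f M) = f {} + f {z} + f {y} + f {y,z} + f {x} + f {x,z} + f {x,y} + f {x,y,z}"
  using assms by (simp add: sum_Pow_insert add.assoc)

lemma expand2:
  fixes x y :: nat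
  assumes "x \<noteq> y"
  shows "(\<Sum>M\<in>Pow {x,y}. f M) = f {} + f {y} + f {x} + f {x,y}"
  using assms by (simp add: sum_Pow_insert add.assoc)



theorem mainTheorem7:
  fixes k :: nat and a :: "nat \<Rightarrow> nat"
  assumes kpos: "k \<ge> 1" and apos: "\<forall>j\<in>{1..k}. a j > 0"
  defines "A \<equiv> (\<Sum>j\<in>{1..k}. a j)"
  defines "n \<equiv> k + 3"
  defines "q \<equiv> 4 * real A + 2"
  defines "w \<equiv> (\<lambda>j::nat. if j \<in> {1..k} then 8 * real (a j) else if j \<in> {k+1..k+3} then 1 else 0)"
  defines "N \<equiv> {1..n}"
  defines "T \<equiv> {n - 1, n}"
  defines "t \<equiv> n + 1"
  shows "banzhaf (merge_players N T t) (merge_weights w T t) q t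
           > banzhaf N w q (n - 1) + banzhaf N w q n
         \<longleftrightarrow> (\<exists>P \<subseteq> {1..k}. (\<Sum>j\<in>P. a j) = (\<Sum>j\<in>{1..k} - P. a j))"
proof -
  define K where "K = {1..k}"
  define Z where "Z = {k+1, k+2, k+3}"
  define Z' where "Z' = {k+1, k+4}"
  define w' where "w' = merge_weights w T t"
  define N' where "N' = merge_players N T t"
  define p where "p = card {S. S \<subseteq> K \<and> 2 * sum a S = A}"
  have n1: "n - 1 = k + 2" "n = k + 3" "t = k + 4" unfolding n_def t_def by auto
  have fK: "finite K" unfolding K_def by simp
  have NKZ: "N = K \<union> Z" unfolding N_def K_def Z_def n_def by auto
  have NKZ': "N' = K \<union> Z'" unfolding N'_def merge_players_def N_def T_def n1 K_def Z'_def n_def by auto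
  have wK: "\<forall>i\<in>K. w i = 8 * real (a i)" unfolding w_def K_def by auto
  have w'K: "\<forall>i\<in>K. w' i = 8 * real (a i)" unfolding w'_def merge_weights_def n1 using wK unfolding K_def by auto
  have wv: "w (k+1) = 1" "w (k+2) = 1" "w (k+3) = 1" unfolding w_def by auto
  have w'v: "w' (k+1) = 1" "w' (k+4) = 2"
    unfolding w'_def merge_weights_def n1 T_def using wv by auto
  have qA: "q = 4 * real A + 2" by (simp add: q_def)
  have dZ: "Z \<inter> K = {}" "Z' \<inter> K = {}" unfolding Z_def Z'_def K_def by auto
  have hcZ: "hc w q j K M = (if j \<in> K then GB q a j K (sum w M) else if j \<in> M then GS q a K (sum w M) (w j) else 0)"
    if "M \<subseteq> Z" for j M
    by (rule hc_eval[OF fK _ _ wK]) (use that dZ in \<open>auto simp: Z_def intro: finite_subset\<close>)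
  have hcZ': "hc w' q j K M = (if j \<in> K then GB q a j K (sum w' M) else if j \<in> M then GS q a K (sum w' M) (w' j) else 0)"
    if "M \<subseteq> Z'" for j M
    by (rule hc_eval[OF fK _ _ w'K]) (use that dZ in \<open>auto simp: Z'_def intro: finite_subset\<close>)
  have etaN: "eta N w q j = (\<Sum>M\<in>Pow Z. hc w q j K M)" for j
    unfolding eta_def NKZ hc_def by (rule card_split_Pow[OF fK]) (use dZ in \<open>auto simp: Z_def\<close>)
  have etaN': "eta N' w' q j = (\<Sum>M\<in>Pow Z'. hc w' q j K M)" for j
    unfolding eta_def NKZ' hc_def by (rule card_split_Pow[OF fK]) (use dZ in \<open>auto simp: Z'_def\<close>)
  have kK: "k+1 \<notin> K" "k+2 \<notin> K" "k+3 \<notin> K" "k+4 \<notin> K" unfolding K_def by auto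
  have E3: "eta N w q j = hc w q j K {} + hc w q j K {k+3} + hc w q j K {k+2} + hc w q j K {k+2,k+3}
     + hc w q j K {k+1} + hc w q j K {k+1,k+3} + hc w q j K {k+1,k+2} + hc w q j K {k+1,k+2,k+3}" for j
    unfolding etaN Z_def by (rule expand3) auto
  have E2: "eta N' w' q j = hc w' q j K {} + hc w' q j K {k+4} + hc w' q j K {k+1} + hc w' q j K {k+1,k+4}" for j
    unfolding etaN' Z'_def by (rule expand2) auto
  have g01: "GB q a j K 0 = GB q a j K 1" for j unfolding qA by (rule GB01)
  have g23: "GB q a j K 2 = GB q a j K 3" for j unfolding qA by (rule GB23)
  have s1: "GS q a K 1 1 = 0" unfolding qA using GS_zero[of 1 A a K] by simp
  have s3: "GS q a K 3 1 = 0" unfolding qA using GS_zero[of 3 A a K] by simp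
  have p1: "GS q a K 2 1 = p" unfolding qA p_def using GS_p[of 2 1 A a K] by simp
  have p2: "GS q a K 2 2 = p" unfolding qA p_def using GS_p[of 2 2 A a K] by simp
  have p3: "GS q a K 3 2 = p" unfolding qA p_def using GS_p[of 3 2 A a K] by simp
  have big: "eta N w q j = 2 * eta N' w' q j" if "j \<in> K" for j
  proof -
    have "eta N w q j = GB q a j K 0 + 3 * GB q a j K 1 + 3 * GB q a j K 2 + GB q a j K 3"
      unfolding E3 using that wv by (subst hcZ, simp add: Z_def)+ simp
    moreover have "eta N' w' q j = GB q a j K 0 + GB q a j K 1 + GB q a j K 2 + GB q a j K 3"
      unfolding E2 using that w'v by (subst hcZ', simp add: Z'_def)+ simp
    ultimately show ?thesis using g01[of j] g23[of j] by simp
  qed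
  have sm: "eta N w q j = 2 * p" if "j \<in> Z" for j
  proof -
    have "j = k+1 \<or> j = k+2 \<or> j = k+3" using that unfolding Z_def by auto
    then show ?thesis
      unfolding E3 using kK wv s1 s3 p1 by (elim disjE; (subst hcZ, simp add: Z_def)+; simp)
  qed
  have tt: "eta N' w' q (k+4) = 2 * p"
    unfolding E2 using kK w'v p2 p3 by (subst hcZ', simp add: Z'_def)+ simp
  have t0: "eta N' w' q (k+1) = 0"
    unfolding E2 using kK w'v s1 s3 by (subst hcZ', simp add: Z'_def)+ simp
  define B where "B = (\<Sum>j\<in>K. real (eta N' w' q j))"
  have B0: "B \<ge> 0" unfolding B_def by (simp add: sum_nonneg)
  have sumN: "(\<Sum>j\<in>N. real (eta N w q j)) = 2 * B + 6 * real p"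
  proof -
    have "(\<Sum>j\<in>N. real (eta N w q j)) = (\<Sum>j\<in>K. real (eta N w q j)) + (\<Sum>j\<in>Z. real (eta N w q j))"
      unfolding NKZ by (rule sum.union_disjoint) (use fK dZ in \<open>auto simp: Z_def\<close>)
    also have "(\<Sum>j\<in>K. real (eta N w q j)) = 2 * B"
      unfolding B_def by (simp add: big sum_distrib_left)
    also have "(\<Sum>j\<in>Z. real (eta N w q j)) = 6 * real p"
      using sm by (simp add: Z_def)
    finally show ?thesis .
  qed
  have sumN': "(\<Sum>j\<in>N'. real (eta N' w' q j)) = B + 2 * real p"
  proof -
    have "(\<Sum>j\<in>N'. real (eta N' w' q j)) = (\<Sum>j\<in>K. real (eta N' w' q j)) + (\<Sum>j\<in>Z'. real (eta N' w' q j))"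
      unfolding NKZ' by (rule sum.union_disjoint) (use fK dZ in \<open>auto simp: Z'_def\<close>)
    also have "(\<Sum>j\<in>Z'. real (eta N' w' q j)) = 2 * real p"
      using tt t0 by (simp add: Z'_def)
    finally show ?thesis unfolding B_def .
  qed
  have bz1: "banzhaf N' w' q t = 2 * real p / (B + 2 * real p)"
    unfolding banzhaf_def sumN' n1 tt by simp
  have bz2: "banzhaf N w q (n - 1) + banzhaf N w q n = 4 * real p / (2 * B + 6 * real p)"
    unfolding banzhaf_def sumN n1 using sm[of "k+2"] sm[of "k+3"] by (simp add: Z_def add_divide_distrib[symmetric])
  have ineq: "(2 * real p / (B + 2 * real p) > 4 * real p / (2 * B + 6 * real p)) \<longleftrightarrow> p > 0"
  proof (cases "p = 0")
    case True then show ?thesis by simp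
  next
    case False
    then have pp: "real p > 0" by simp
    have "2 * real p / (B + 2 * real p) > 4 * real p / (2 * B + 6 * real p)"
      using pp B0 by (simp add: field_simps)
    then show ?thesis using False by simp
  qed
  have part: "p > 0 \<longleftrightarrow> (\<exists>P \<subseteq> K. (\<Sum>j\<in>P. a j) = (\<Sum>j\<in>K - P. a j))"
  proof -
    have fin: "finite {S. S \<subseteq> K \<and> 2 * sum a S = A}" using fK by auto
    have eqv: "2 * sum a P = A \<longleftrightarrow> sum a P = sum a (K - P)" if "P \<subseteq> K" for P
    proof -
      have "sum a (K - P) = A - sum a P" unfolding A_def K_def[symmetric]
        using sum_diff_nat[OF finite_subset[OF that fK] that] .
      moreover have "sum a P \<le> A" unfolding A_def K_def[symmetric] using that fK by (simp add: sum_mono2)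
      ultimately show ?thesis by linarith
    qed
    have "p > 0 \<longleftrightarrow> {S. S \<subseteq> K \<and> 2 * sum a S = A} \<noteq> {}" unfolding p_def by (metis card_gt_0_iff fin)
    also have "\<dots> \<longleftrightarrow> (\<exists>P \<subseteq> K. (\<Sum>j\<in>P. a j) = (\<Sum>j\<in>K - P. a j))" using eqv by blast
    finally show ?thesis .
  qed
  show ?thesis
    unfolding w'_def[symmetric] N'_def[symmetric] bz1 bz2 ineq part K_def ..
qed

end
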